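(* Let $\mathfrak{n}^{\mathbb{Q}}$ be a rational nilpotent Lie algebra of nilpotency class $c$ and $f$ an Anosov automorphism of $\mathfrak{n}^{\mathbb{Q}}$. Then $\min(\mathrm{sg}(f))\geq c$, i.e. $f$ has at least $c$ eigenvalues (with multiplicity) of absolute value $<1$ and at least $c$ eigenvalues of absolute value $>1$.
   Context: The lower central series is $\gamma_1(\mathfrak{n})=\mathfrak{n}$, $\gamma_i(\mathfrak{n})=[\mathfrak{n},\gamma_{i-1}(\mathfrak{n})]$; $\mathfrak{n}$ has nilpotency class $c$ if $\gamma_{c+1}(\mathfrak{n})=0\neq\gamma_c(\mathfrak{n})$. An automorphism of a rational Lie algebra is Anosov if it is hyperbolic (no eigenvalue of absolute value $1$) and integer-like (characteristic polynomial with integer coefficients and determinant $\pm1$). Its signature $\mathrm{sg}(f)$ is the set $\{p,q\}$ with $p$ the number of eigenvalues of absolute value $<1$ and $q$ the number of absolute value $>1$. *)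

theory Defs
  imports "Jordan_Normal_Form.Char_Poly" "HOL-Computational_Algebra.Polynomial"
begin

text \<open>A finite-dimensional rational Lie algebra is modelled as rat^n (coordinates
w.r.t. a basis), i.e. carrier_vec n, with a bracket br.\<close>

definition lie_algebra :: "nat \<Rightarrow> (rat vec \<Rightarrow> rat vec \<Rightarrow> rat vec) \<Rightarrow> bool" where
  "lie_algebra n br \<longleftrightarrow>
     (\<forall>x\<in>carrier_vec n. \<forall>y\<in>carrier_vec n. br x y \<in> carrier_vec n) \<and>
     (\<forall>x\<in>carrier_vec n. \<forall>y\<in>carrier_vec n. \<forall>z\<in>carrier_vec n. \<forall>a b.
        br (a \<cdot>\<^sub>v x + b \<cdot>\<^sub>v y) z = a \<cdot>\<^sub>v br x z + b \<cdot>\<^sub>v br y z \<and>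
        br z (a \<cdot>\<^sub>v x + b \<cdot>\<^sub>v y) = a \<cdot>\<^sub>v br z x + b \<cdot>\<^sub>v br z y) \<and>
     (\<forall>x\<in>carrier_vec n. br x x = 0\<^sub>v n) \<and>
     (\<forall>x\<in>carrier_vec n. \<forall>y\<in>carrier_vec n. \<forall>z\<in>carrier_vec n.
        br x (br y z) + br y (br z x) + br z (br x y) = 0\<^sub>v n)"

inductive_set lspan :: "nat \<Rightarrow> rat vec set \<Rightarrow> rat vec set" for n S where
  zero: "0\<^sub>v n \<in> lspan n S"
| gen: "s \<in> S \<Longrightarrow> s \<in> lspan n S"
| add: "x \<in> lspan n S \<Longrightarrow> y \<in> lspan n S \<Longrightarrow> x + y \<in> lspan n S"
| smult: "x \<in> lspan n S \<Longrightarrow> c \<cdot>\<^sub>v x \<in> lspan n S"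

text \<open>Lower central series: lcs n br i = gamma_i (1-indexed; index 0 also the whole algebra).\<close>
fun lcs :: "nat \<Rightarrow> (rat vec \<Rightarrow> rat vec \<Rightarrow> rat vec) \<Rightarrow> nat \<Rightarrow> rat vec set" where
  "lcs n br 0 = carrier_vec n"
| "lcs n br (Suc 0) = carrier_vec n"
| "lcs n br (Suc (Suc i)) =
     lspan n {br x y | x y. x \<in> carrier_vec n \<and> y \<in> lcs n br (Suc i)}"

definition nilpotency_class :: "nat \<Rightarrow> (rat vec \<Rightarrow> rat vec \<Rightarrow> rat vec) \<Rightarrow> nat \<Rightarrow> bool" where
  "nilpotency_class n br c \<longleftrightarrow> lcs n br (Suc c) = {0\<^sub>v n} \<and> lcs n br c \<noteq> {0\<^sub>v n}"

definition lie_automorphism :: "nat \<Rightarrow> (rat vec \<Rightarrow> rat vec \<Rightarrow> rat vec) \<Rightarrow> rat mat \<Rightarrow> bool" where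
  "lie_automorphism n br f \<longleftrightarrow> f \<in> carrier_mat n n \<and> invertible_mat f \<and>
     (\<forall>x\<in>carrier_vec n. \<forall>y\<in>carrier_vec n. f *\<^sub>v br x y = br (f *\<^sub>v x) (f *\<^sub>v y))"

text \<open>Complex characteristic polynomial; eigenvalues (with multiplicity) are its roots.\<close>
definition cpoly :: "rat mat \<Rightarrow> complex poly" where
  "cpoly f = char_poly (map_mat of_rat f)"

definition hyperbolic :: "rat mat \<Rightarrow> bool" where
  "hyperbolic f \<longleftrightarrow> (\<forall>z. poly (cpoly f) z = 0 \<longrightarrow> cmod z \<noteq> 1)"

definition integer_like :: "rat mat \<Rightarrow> bool" where
  "integer_like f \<longleftrightarrow> (\<forall>i. coeff (char_poly f) i \<in> \<int>) \<and> (det f = 1 \<or> det f = -1)"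

definition anosov :: "nat \<Rightarrow> (rat vec \<Rightarrow> rat vec \<Rightarrow> rat vec) \<Rightarrow> rat mat \<Rightarrow> bool" where
  "anosov n br f \<longleftrightarrow> lie_automorphism n br f \<and> hyperbolic f \<and> integer_like f"

definition n_small :: "rat mat \<Rightarrow> nat" where
  "n_small f = (\<Sum>z\<in>{z. poly (cpoly f) z = 0 \<and> cmod z < 1}. order z (cpoly f))"

definition n_large :: "rat mat \<Rightarrow> nat" where
  "n_large f = (\<Sum>z\<in>{z. poly (cpoly f) z = 0 \<and> cmod z > 1}. order z (cpoly f))"

end

theory Submission
  imports Defs "Berlekamp_Zassenhaus.Factor_Bound"
begin

hide_const (open) UnivPoly.coeff Coset.order

definition nsm :: "complex poly \<Rightarrow> nat" where
  "nsm p = (\<Sum>z\<in>{z. poly p z = 0 \<and> cmod z < 1}. Polynomial.order z p)"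
definition nlg :: "complex poly \<Rightarrow> nat" where
  "nlg p = (\<Sum>z\<in>{z. poly p z = 0 \<and> cmod z > 1}. Polynomial.order z p)"

lemma sum_order_mult:
  fixes p q :: "complex poly"
  assumes pq: "p * q \<noteq> 0"
  shows "(\<Sum>z\<in>{z. poly (p*q) z = 0 \<and> P z}. Polynomial.order z (p*q)) =
         (\<Sum>z\<in>{z. poly p z = 0 \<and> P z}. Polynomial.order z p) + (\<Sum>z\<in>{z. poly q z = 0 \<and> P z}. Polynomial.order z q)"
proof -
  have p: "p \<noteq> 0" and q: "q \<noteq> 0" using pq by auto
  let ?S = "{z. poly (p*q) z = 0 \<and> P z}"
  have fin: "finite ?S" using poly_roots_finite[OF pq] by (rule rev_finite_subset) auto
  have "(\<Sum>z\<in>?S. Polynomial.order z (p*q)) = (\<Sum>z\<in>?S. Polynomial.order z p) + (\<Sum>z\<in>?S. Polynomial.order z q)"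
    using order_mult[OF pq] by (simp add: sum.distrib)
  moreover have "(\<Sum>z\<in>?S. Polynomial.order z p) = (\<Sum>z\<in>{z. poly p z = 0 \<and> P z}. Polynomial.order z p)"
    by (rule sum.mono_neutral_right[OF fin]) (auto simp: order_root)
  moreover have "(\<Sum>z\<in>?S. Polynomial.order z q) = (\<Sum>z\<in>{z. poly q z = 0 \<and> P z}. Polynomial.order z q)"
    by (rule sum.mono_neutral_right[OF fin]) (auto simp: order_root)
  ultimately show ?thesis by simp
qed

lemma nsm_mult: "p * q \<noteq> 0 \<Longrightarrow> nsm (p*q) = nsm p + nsm q"
  unfolding nsm_def by (rule sum_order_mult)
lemma nlg_mult: "p * q \<noteq> 0 \<Longrightarrow> nlg (p*q) = nlg p + nlg q"
  unfolding nlg_def by (rule sum_order_mult)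

lemma sum_order_ge1:
  fixes p :: "complex poly"
  assumes "p \<noteq> 0" "poly p z = 0" "P z"
  shows "1 \<le> (\<Sum>z\<in>{z. poly p z = 0 \<and> P z}. Polynomial.order z p)"
proof -
  let ?S = "{z. poly p z = 0 \<and> P z}"
  have fin: "finite ?S" using poly_roots_finite[OF assms(1)] by (rule rev_finite_subset) auto
  have "1 \<le> Polynomial.order z p" using assms order_root by (metis less_one not_le)
  also have "\<dots> \<le> (\<Sum>z\<in>?S. Polynomial.order z p)" by (rule member_le_sum) (use assms fin in auto)
  finally show ?thesis .
qed

lemma prod_list_gt1: "(\<forall>x\<in>set xs. (x::real) > 1) \<Longrightarrow> xs \<noteq> [] \<Longrightarrow> prod_list xs > 1"
proof (induction xs)
  case (Cons a xs)
  show ?case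
  proof (cases "xs = []")
    case False
    then have "prod_list xs > 1" using Cons by auto
    then show ?thesis using Cons(2) by (simp add: less_1_mult)
  qed (use Cons in auto)
qed simp

lemma prod_list_lt1: "(\<forall>x\<in>set xs. (x::real) < 1 \<and> x \<ge> 0) \<Longrightarrow> xs \<noteq> [] \<Longrightarrow> prod_list xs < 1"
proof (induction xs)
  case (Cons a xs)
  show ?case
  proof (cases "xs = []")
    case False
    then have "prod_list xs < 1" using Cons by auto
    moreover have "prod_list xs \<ge> 0" using Cons(2) by (intro prod_list_nonneg) auto
    ultimately show ?thesis using Cons(2) proof -
      have "a * prod_list xs \<le> 1 * prod_list xs" using Cons(2) \<open>prod_list xs \<ge> 0\<close> by (intro mult_right_mono) auto
      thus ?thesis using \<open>prod_list xs < 1\<close> by simp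
    qed
  qed (use Cons in auto)
qed simp

lemma cmod_prod_list: "cmod (\<Prod>a\<leftarrow>as. f a) = (\<Prod>a\<leftarrow>as. cmod (f a))"
  by (induction as) (auto simp: norm_mult)

lemma roots_both:
  fixes p :: "complex poly"
  assumes m: "monic p" and d: "degree p > 0" and c0: "cmod (poly p 0) = 1"
    and h: "\<forall>z. poly p z = 0 \<longrightarrow> cmod z \<noteq> 1"
  shows "\<exists>z. poly p z = 0 \<and> cmod z < 1" "\<exists>z. poly p z = 0 \<and> cmod z > 1"
proof -
  obtain as where as: "p = Polynomial.smult (lead_coeff p) (\<Prod>a\<leftarrow>as. [:- a, 1:])"
    using fundamental_theorem_algebra_factorized[of p] by metis
  have pas: "p = (\<Prod>a\<leftarrow>as. [:- a, 1:])" using as m by simp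
  have len: "length as = degree p" using degree_linear_factors[of uminus as] pas by simp
  have ne: "as \<noteq> []" using len d by auto
  have roots: "\<And>a. a \<in> set as \<Longrightarrow> poly p a = 0" unfolding pas
    by (simp add: poly_prod_list prod_list_zero_iff)
  have "poly p 0 = (\<Prod>a\<leftarrow>as. - a)" unfolding pas by (simp add: poly_prod_list o_def)
  hence "cmod (poly p 0) = (\<Prod>a\<leftarrow>as. cmod a)"
    by (simp add: cmod_prod_list)
  hence prod1: "(\<Prod>a\<leftarrow>as. cmod a) = 1" using c0 by simp
  show "\<exists>z. poly p z = 0 \<and> cmod z < 1"
  proof (rule ccontr)
    assume "\<not> ?thesis"
    hence "\<forall>x\<in>set (map cmod as). x > 1" using roots h by (force simp: not_less order.order_iff_strict)
    from prod_list_gt1[OF this] ne prod1 show False by simp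
  qed
  show "\<exists>z. poly p z = 0 \<and> cmod z > 1"
  proof (rule ccontr)
    assume "\<not> ?thesis"
    hence "\<forall>x\<in>set (map cmod as). x < 1 \<and> x \<ge> 0" using roots h by (force simp: not_less order.order_iff_strict)
    from prod_list_lt1[OF this] ne prod1 show False by simp
  qed
qed

lemma gauss_factor:
  fixes p :: "int poly" and g h :: "rat poly"
  assumes pgh: "map_poly rat_of_int p = g * h" and mg: "monic g" and mh: "monic h"
  shows "\<exists>g'. g = map_poly rat_of_int g'"
proof -
  have lp: "lead_coeff (map_poly rat_of_int p) = 1" using pgh mg mh by (simp add: lead_coeff_mult)
  hence lp1: "lead_coeff p = 1" by simp
  hence p0: "p \<noteq> 0" by auto
  have "content p dvd 1" using content_dvd_coeff[of p "degree p"] lp1 by simp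
  hence cp: "content p = 1" using content_ge_0_int[of p] by simp
  obtain r rg where g: "rat_to_normalized_int_poly g = (r,rg)" by force
  obtain s sh where h: "rat_to_normalized_int_poly h = (s,sh)" by force
  have prs: "p = rg * sh" by (rule rat_to_int_factor_content_1[OF cp pgh g h p0])
  have "lead_coeff rg * lead_coeff sh = 1" using lp1 prs by (simp add: lead_coeff_mult)
  hence lrg: "lead_coeff rg = 1 \<or> lead_coeff rg = -1" using zmult_eq_1_iff by blast
  note gr = rat_to_normalized_int_poly[OF g]
  have "lead_coeff g = r * rat_of_int (lead_coeff rg)" using gr(1) by simp
  hence "r * rat_of_int (lead_coeff rg) = 1" using mg by simp
  with lrg gr(2) have "lead_coeff rg = 1" and r1: "r = 1" by auto
  thus ?thesis using gr(1) r1 by auto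
qed

definition goodp :: "rat poly \<Rightarrow> bool" where
  "goodp q \<longleftrightarrow> monic q \<and> (\<exists>p. q = map_poly rat_of_int p) \<and> \<bar>coeff q 0\<bar> = 1 \<and>
     (\<forall>z. poly (map_poly of_rat q) z = 0 \<longrightarrow> cmod z \<noteq> 1)"

lemma int_coeff0: "q = map_poly rat_of_int p \<Longrightarrow> coeff q 0 \<in> \<int>"
  by simp

lemma goodp_factor:
  assumes gd: "goodp (g*h)" and mg: "monic g" and mh: "monic h"
  shows "goodp g"
proof -
  obtain p where p: "g * h = map_poly rat_of_int p" using gd unfolding goodp_def by auto
  obtain g' where g': "g = map_poly rat_of_int g'" using gauss_factor[OF p[symmetric] mg mh] by auto
  obtain h' where h': "h = map_poly rat_of_int h'" using gauss_factor[of p h g] p mg mh by (auto simp: mult.commute)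
  have "coeff g 0 * coeff h 0 = coeff (g*h) 0" by (simp add: coeff_mult_0)
  hence "of_int (coeff g' 0 * coeff h' 0) = (coeff (g*h) 0 :: rat)" using g' h' by simp
  hence "\<bar>coeff g' 0 * coeff h' 0\<bar> = 1" using gd unfolding goodp_def
    by (metis of_int_abs of_int_eq_1_iff)
  hence "\<bar>coeff g' 0\<bar> * \<bar>coeff h' 0\<bar> = 1" by (simp add: abs_mult)
  hence "\<bar>coeff g' 0\<bar> = 1" using pos_zmult_eq_1_iff[of "\<bar>coeff g' 0\<bar>" "\<bar>coeff h' 0\<bar>"] by (cases "coeff g' 0 = 0") auto
  hence c0: "\<bar>coeff g 0\<bar> = 1" using g' by simp
  have "map_poly (of_rat :: rat \<Rightarrow> complex) (g*h) = map_poly of_rat g * map_poly of_rat h"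
    proof -
    interpret rp: map_poly_comm_ring_hom "of_rat :: rat \<Rightarrow> complex" ..
    show ?thesis by (rule rp.hom_mult)
  qed
  hence "\<forall>z. poly (map_poly of_rat g) z = 0 \<longrightarrow> cmod z \<noteq> 1" using gd unfolding goodp_def
    by (metis mult_zero_left poly_mult)
  with c0 g' mg show ?thesis unfolding goodp_def by auto
qed

lemma goodp_nsm:
  assumes gd: "goodp q" and d: "degree q > 0"
  shows "nsm (map_poly of_rat q) \<ge> 1 \<and> nlg (map_poly of_rat q) \<ge> 1"
proof -
  let ?p = "map_poly (of_rat :: rat \<Rightarrow> complex) q"
  have m: "monic ?p" using gd unfolding goodp_def by simp
  have dp: "degree ?p > 0" using d by simp
  have "poly ?p 0 = of_rat (coeff q 0)" by (simp add: poly_0_coeff_0)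
  hence c0: "cmod (poly ?p 0) = 1" proof -
    have "coeff q 0 = 1 \<or> coeff q 0 = -1" using gd unfolding goodp_def by (auto simp: abs_if split: if_splits)
    thus ?thesis using \<open>poly ?p 0 = _\<close> by auto
  qed
  have h: "\<forall>z. poly ?p z = 0 \<longrightarrow> cmod z \<noteq> 1" using gd unfolding goodp_def by auto
  have p0: "?p \<noteq> 0" using m by auto
  obtain z1 where z1: "poly ?p z1 = 0" "cmod z1 < 1" using roots_both(1)[OF m dp c0 h] by auto
  obtain z2 where z2: "poly ?p z2 = 0" "cmod z2 > 1" using roots_both(2)[OF m dp c0 h] by auto
  show ?thesis unfolding nsm_def nlg_def
    using sum_order_ge1[OF p0 z1(1), of "\<lambda>z. cmod z < 1"] sum_order_ge1[OF p0 z2(1), of "\<lambda>z. cmod z > 1"] z1 z2 by auto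
qed


definition colsp :: "nat \<Rightarrow> rat vec list \<Rightarrow> rat vec set" where
  "colsp n ws = {mat_of_cols n ws *\<^sub>v x | x. x \<in> carrier_vec (length ws)}"
definition li :: "nat \<Rightarrow> rat vec list \<Rightarrow> bool" where
  "li n ws \<longleftrightarrow> (\<forall>x\<in>carrier_vec (length ws). mat_of_cols n ws *\<^sub>v x = 0\<^sub>v n \<longrightarrow> x = 0\<^sub>v (length ws))"
definition subsp :: "nat \<Rightarrow> rat vec set \<Rightarrow> bool" where
  "subsp n W \<longleftrightarrow> W \<subseteq> carrier_vec n \<and> 0\<^sub>v n \<in> W \<and> (\<forall>x\<in>W. \<forall>y\<in>W. x + y \<in> W) \<and> (\<forall>a. \<forall>x\<in>W. a \<cdot>\<^sub>v x \<in> W)"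

lemma sum_split_ivl: "sum f {0..<k+l} = sum f {0..<k} + sum (\<lambda>j. f (k+j)) {0..<(l::nat)}"
  by (induction l) (auto simp: add.assoc)

lemma mat_of_cols_append_mult:
  assumes ws: "set ws \<subseteq> carrier_vec n" and us: "set us \<subseteq> carrier_vec n"
    and a: "a \<in> carrier_vec (length ws)" and b: "b \<in> carrier_vec (length us)"
  shows "mat_of_cols n (ws @ us) *\<^sub>v (a @\<^sub>v b) = mat_of_cols n ws *\<^sub>v a + mat_of_cols n us *\<^sub>v b"
proof (rule eq_vecI)
  fix i assume "i < dim_vec (mat_of_cols n ws *\<^sub>v a + mat_of_cols n us *\<^sub>v b)"
  hence i: "i < n" by simp
  let ?k = "length ws" let ?l = "length us"
  have "(mat_of_cols n (ws @ us) *\<^sub>v (a @\<^sub>v b)) $ i = (\<Sum>j\<in>{0..<?k+?l}. (ws@us)!j $ i * (a @\<^sub>v b) $ j)"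
    using i a b by (simp add: mult_mat_vec_def scalar_prod_def mat_of_cols_def)
  also have "\<dots> = (\<Sum>j\<in>{0..<?k}. ws!j $ i * a $ j) + (\<Sum>j\<in>{0..<?l}. us!j $ i * b $ j)"
    unfolding sum_split_ivl using a b by (simp add: nth_append)
  also have "\<dots> = (mat_of_cols n ws *\<^sub>v a + mat_of_cols n us *\<^sub>v b) $ i"
    using i a b by (simp add: mult_mat_vec_def scalar_prod_def mat_of_cols_def)
  finally show "(mat_of_cols n (ws @ us) *\<^sub>v (a @\<^sub>v b)) $ i = (mat_of_cols n ws *\<^sub>v a + mat_of_cols n us *\<^sub>v b) $ i" .
qed simp

lemma mat_mult_zero_vec: "A \<in> carrier_mat nr nc \<Longrightarrow> A *\<^sub>v 0\<^sub>v nc = 0\<^sub>v nr"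
  by (intro eq_vecI) auto

lemma mat_of_cols_append_zero:
  assumes ws: "set ws \<subseteq> carrier_vec n" and us: "set us \<subseteq> carrier_vec n"
    and a: "a \<in> carrier_vec (length ws)"
  shows "mat_of_cols n (ws @ us) *\<^sub>v (a @\<^sub>v 0\<^sub>v (length us)) = mat_of_cols n ws *\<^sub>v a"
proof -
  have "mat_of_cols n ws *\<^sub>v a \<in> carrier_vec n" using a by (intro mult_mat_vec_carrier) auto
  thus ?thesis using mat_of_cols_append_mult[OF ws us a, of "0\<^sub>v (length us)"]
    by (simp add: mat_mult_zero_vec[OF mat_of_cols_carrier(1)])
qed

lemma mat_of_cols_single:
  fixes v :: "rat vec"
  assumes "v \<in> carrier_vec n" "b \<in> carrier_vec 1"
  shows "mat_of_cols n [v] *\<^sub>v b = b $ 0 \<cdot>\<^sub>v v"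
  using assms by (intro eq_vecI) (auto simp: mult_mat_vec_def scalar_prod_def mat_of_cols_def mult.commute)

lemma mat_of_cols_nil: "x \<in> carrier_vec 0 \<Longrightarrow> mat_of_cols n [] *\<^sub>v x = 0\<^sub>v n"
  by (intro eq_vecI) (auto simp: mult_mat_vec_def scalar_prod_def mat_of_cols_def)

lemma colsp_subset:
  assumes W: "subsp n W" and ws: "set ws \<subseteq> W"
  shows "colsp n ws \<subseteq> W"
  using ws
proof (induction ws)
  case Nil
  then show ?case using W by (auto simp: colsp_def mat_of_cols_nil subsp_def)
next
  case (Cons w ws)
  have Wc: "W \<subseteq> carrier_vec n" using W by (simp add: subsp_def)
  show ?case
  proof
    fix y assume "y \<in> colsp n (w # ws)"
    then obtain x where x: "x \<in> carrier_vec (1 + length ws)" and y: "y = mat_of_cols n ([w] @ ws) *\<^sub>v x"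
      by (auto simp: colsp_def)
    have xs: "x = vec_first x 1 @\<^sub>v vec_last x (length ws)" using x by simp
    have "y = mat_of_cols n [w] *\<^sub>v vec_first x 1 + mat_of_cols n ws *\<^sub>v vec_last x (length ws)"
      unfolding y by (subst xs, rule mat_of_cols_append_mult) (use Cons.prems Wc in auto)
    also have "\<dots> = (vec_first x 1 $ 0) \<cdot>\<^sub>v w + mat_of_cols n ws *\<^sub>v vec_last x (length ws)"
      using Cons.prems Wc by (subst mat_of_cols_single) auto
    finally have y2: "y = \<dots>" .
    have "mat_of_cols n ws *\<^sub>v vec_last x (length ws) \<in> colsp n ws"
      unfolding colsp_def by (intro CollectI exI[of _ "vec_last x (length ws)"]) auto
    hence "mat_of_cols n ws *\<^sub>v vec_last x (length ws) \<in> W" using Cons by auto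
    moreover have "(vec_first x 1 $ 0) \<cdot>\<^sub>v w \<in> W" using W Cons.prems by (auto simp: subsp_def)
    ultimately show "y \<in> W" unfolding y2 using W by (auto simp: subsp_def)
  qed
qed

lemma wide_kernel:
  fixes M :: "rat mat"
  assumes M: "M \<in> carrier_mat n k" and nk: "n < k"
  shows "\<exists>x\<in>carrier_vec k. x \<noteq> 0\<^sub>v k \<and> M *\<^sub>v x = 0\<^sub>v n"
proof -
  define M' where "M' = mat k k (\<lambda>(i,j). if i < n then M $$ (i,j) else 0)"
  have M'c: "M' \<in> carrier_mat k k" by (simp add: M'_def)
  have "transpose_mat M' *\<^sub>v unit_vec k (k-1) = 0\<^sub>v k"
    using nk by (intro eq_vecI) (auto simp: M'_def mult_mat_vec_def scalar_prod_def unit_vec_def intro!: sum.neutral)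
  moreover have "unit_vec k (k-1) \<noteq> (0\<^sub>v k :: rat vec)" using nk
    by (metis diff_less gr_implies_not0 index_unit_vec(1) index_zero_vec(1) less_one zero_neq_one zero_less_iff_neq_zero)
  moreover have Tc: "transpose_mat M' \<in> carrier_mat k k" using M'c by simp
  ultimately have "det (transpose_mat M') = 0"
    using det_0_iff_vec_prod_zero[OF Tc] by (auto intro!: exI[of _ "unit_vec k (k-1)"])
  hence "det M' = 0" using det_transpose[OF M'c] by simp
  then obtain x where x: "x \<in> carrier_vec k" "x \<noteq> 0\<^sub>v k" "M' *\<^sub>v x = 0\<^sub>v k"
    using det_0_iff_vec_prod_zero[OF M'c] by auto
  have "M *\<^sub>v x = 0\<^sub>v n"
  proof (rule eq_vecI)
    fix i assume "i < dim_vec (0\<^sub>v n :: rat vec)"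
    hence i: "i < n" by simp
    have "(M' *\<^sub>v x) $ i = 0" using x(3) i nk by simp
    thus "(M *\<^sub>v x) $ i = 0\<^sub>v n $ i"
      using i nk M x(1) by (simp add: M'_def mult_mat_vec_def scalar_prod_def row_def)
  qed (use M in simp)
  with x show ?thesis by auto
qed

lemma li_length:
  assumes "li n ws" shows "length ws \<le> n"
proof (rule ccontr)
  assume "\<not> ?thesis"
  then obtain x where "x \<in> carrier_vec (length ws)" "x \<noteq> 0\<^sub>v (length ws)" "mat_of_cols n ws *\<^sub>v x = 0\<^sub>v n"
    using wide_kernel[of "mat_of_cols n ws" n "length ws"] by auto
  with assms show False unfolding li_def by auto
qed

lemma li_snoc:
  assumes li: "li n ws" and ws: "set ws \<subseteq> carrier_vec n" and v: "v \<in> carrier_vec n"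
    and nv: "v \<notin> colsp n ws"
  shows "li n (ws @ [v])"
  unfolding li_def
proof (intro ballI impI)
  fix x assume x: "x \<in> carrier_vec (length (ws @ [v]))" and eq: "mat_of_cols n (ws @ [v]) *\<^sub>v x = 0\<^sub>v n"
  let ?k = "length ws"
  define a where "a = vec_first x ?k"
  define b where "b = vec_last x 1"
  have x': "x \<in> carrier_vec (?k + 1)" using x by simp
  have xab: "x = a @\<^sub>v b" unfolding a_def b_def using vec_first_last_append[OF x'] by simp
  have a: "a \<in> carrier_vec ?k" and b: "b \<in> carrier_vec 1" unfolding a_def b_def by auto
  have vv: "set [v] \<subseteq> carrier_vec n" using v by simp
  have "mat_of_cols n (ws @ [v]) *\<^sub>v x = mat_of_cols n ws *\<^sub>v a + mat_of_cols n [v] *\<^sub>v b"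
    unfolding xab using mat_of_cols_append_mult[OF ws vv a] b by simp
  also have "mat_of_cols n [v] *\<^sub>v b = b $ 0 \<cdot>\<^sub>v v" by (rule mat_of_cols_single[OF v b])
  finally have eq2: "mat_of_cols n ws *\<^sub>v a + b $ 0 \<cdot>\<^sub>v v = 0\<^sub>v n" using eq by simp
  have Ma: "mat_of_cols n ws *\<^sub>v a \<in> carrier_vec n" using a by (intro mult_mat_vec_carrier) auto
  have neg: "mat_of_cols n ws *\<^sub>v a = - (b $ 0 \<cdot>\<^sub>v v)"
  proof (rule eq_vecI)
    fix i assume "i < dim_vec (- (b $ 0 \<cdot>\<^sub>v v))"
    hence i: "i < n" using v by simp
    have "(mat_of_cols n ws *\<^sub>v a + b $ 0 \<cdot>\<^sub>v v) $ i = 0" using eq2 i by simp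
    thus "(mat_of_cols n ws *\<^sub>v a) $ i = (- (b $ 0 \<cdot>\<^sub>v v)) $ i" using i v Ma by simp
  qed (use v Ma in simp)
  have b0: "b $ 0 = 0"
  proof (rule ccontr)
    assume nz: "b $ 0 \<noteq> 0"
    have "mat_of_cols n ws *\<^sub>v ((- 1 / b $ 0) \<cdot>\<^sub>v a) = (- 1 / b $ 0) \<cdot>\<^sub>v (mat_of_cols n ws *\<^sub>v a)"
      using a by (simp add: mult_mat_vec[OF mat_of_cols_carrier(1)])
    also have "\<dots> = (- 1 / b $ 0) \<cdot>\<^sub>v (- (b $ 0 \<cdot>\<^sub>v v))" by (simp only: neg)
    also have "\<dots> = v"
    proof (rule eq_vecI)
      fix i assume "i < dim_vec v"
      thus "((- 1 / b $ 0) \<cdot>\<^sub>v (- (b $ 0 \<cdot>\<^sub>v v))) $ i = v $ i" using nz by simp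
    qed simp
    finally have "v = mat_of_cols n ws *\<^sub>v ((- 1 / b $ 0) \<cdot>\<^sub>v a)" by simp
    moreover have "(- 1 / b $ 0) \<cdot>\<^sub>v a \<in> carrier_vec ?k" using a by simp
    ultimately have "v \<in> colsp n ws" unfolding colsp_def by blast
    with nv show False by simp
  qed
  have "mat_of_cols n ws *\<^sub>v a = 0\<^sub>v n" unfolding neg b0 using v by (intro eq_vecI) auto
  hence a0: "a = 0\<^sub>v ?k" using li a unfolding li_def by blast
  have b00: "b = 0\<^sub>v 1" using b b0 by (intro eq_vecI) auto
  have "x = 0\<^sub>v ?k @\<^sub>v 0\<^sub>v 1" unfolding xab a0 b00 ..
  also have "\<dots> = 0\<^sub>v (length (ws @ [v]))" by (rule eq_vecI) (auto simp: nth_append)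
  finally show "x = 0\<^sub>v (length (ws @ [v]))" .
qed


lemma subsp_carrier: "subsp n (carrier_vec n)"
  by (auto simp: subsp_def)

lemma li_nil: "li n []"
  by (auto simp: li_def)

lemma extend:
  assumes W: "subsp n W"
  shows "set ws \<subseteq> W \<Longrightarrow> li n ws \<Longrightarrow> \<exists>us. set us \<subseteq> W \<and> li n (ws@us) \<and> W \<subseteq> colsp n (ws@us)"
proof (induction "n - length ws" arbitrary: ws rule: less_induct)
  case less
  have Wc: "W \<subseteq> carrier_vec n" using W by (simp add: subsp_def)
  show ?case
  proof (cases "W \<subseteq> colsp n ws")
    case True then show ?thesis using less.prems by (intro exI[of _ "[]"]) auto
  next
    case False
    then obtain v where v: "v \<in> W" "v \<notin> colsp n ws" by auto
    have li2: "li n (ws@[v])" by (rule li_snoc) (use less.prems v Wc in auto)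
    have "length (ws@[v]) \<le> n" by (rule li_length[OF li2])
    hence "n - length (ws@[v]) < n - length ws" by simp
    from less.hyps[OF this] li2 less.prems v obtain us where
      us: "set us \<subseteq> W" "li n ((ws@[v])@us)" "W \<subseteq> colsp n ((ws@[v])@us)" by auto
    then show ?thesis using v by (intro exI[of _ "v#us"]) auto
  qed
qed

lemma basis_exists:
  assumes W: "subsp n W"
  shows "\<exists>ws. set ws \<subseteq> W \<and> li n ws \<and> colsp n ws = W"
proof -
  obtain us where us: "set us \<subseteq> W" "li n us" "W \<subseteq> colsp n us"
    using extend[OF W, of "[]"] li_nil by auto
  moreover have "colsp n us \<subseteq> W" by (rule colsp_subset[OF W us(1)])
  ultimately show ?thesis by blast
qed

lemma full_length:
  assumes bs: "set bs \<subseteq> carrier_vec n" and li: "li n bs" and sp: "carrier_vec n \<subseteq> colsp n bs"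
  shows "length bs = n"
proof (rule ccontr)
  assume ne: "length bs \<noteq> n"
  hence lt: "length bs < n" using li_length[OF li] by simp
  let ?P = "mat_of_cols n bs"
  have Pt: "transpose_mat ?P \<in> carrier_mat (length bs) n" by simp
  obtain y where y: "y \<in> carrier_vec n" "y \<noteq> 0\<^sub>v n" "transpose_mat ?P *\<^sub>v y = 0\<^sub>v (length bs)"
    using wide_kernel[OF Pt lt] by auto
  obtain x where x: "x \<in> carrier_vec (length bs)" "y = ?P *\<^sub>v x" using sp y(1) unfolding colsp_def by auto
  have "y \<bullet> y = y \<bullet> (?P *\<^sub>v x)" using x by simp
  also have "\<dots> = (transpose_mat ?P *\<^sub>v y) \<bullet> x"
    by (rule transpose_vec_mult_scalar[symmetric]) (use x y in auto)
  also have "\<dots> = 0" using y(3) x by simp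
  finally have yy: "(\<Sum>i\<in>{0..<n}. y $ i * y $ i) = 0" using y(1) by (simp add: scalar_prod_def)
  have "\<forall>i\<in>{0..<n}. y $ i * y $ i = 0"
    using sum_nonneg_eq_0_iff[of "{0..<n}" "\<lambda>i. y $ i * y $ i"] yy by auto
  hence "y = 0\<^sub>v n" using y(1) by (intro eq_vecI) auto
  with y(2) show False by simp
qed

lemma block_decomp:
  fixes A :: "rat mat"
  assumes A: "A \<in> carrier_mat n n" and W: "subsp n W" and inv: "\<forall>w\<in>W. A *\<^sub>v w \<in> W"
  shows "\<exists>m P Q B C D. m \<le> n \<and> P \<in> carrier_mat n n \<and> Q \<in> carrier_mat n n \<and>
     P * Q = 1\<^sub>m n \<and> Q * P = 1\<^sub>m n \<and> B \<in> carrier_mat m m \<and> C \<in> carrier_mat m (n-m) \<and>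
     D \<in> carrier_mat (n-m) (n-m) \<and> A = P * four_block_mat B C (0\<^sub>m (n-m) m) D * Q \<and>
     W = {P *\<^sub>v (v @\<^sub>v 0\<^sub>v (n-m)) | v. v \<in> carrier_vec m}"
proof -
  have Wc: "W \<subseteq> carrier_vec n" using W by (simp add: subsp_def)
  obtain ws where ws: "set ws \<subseteq> W" "li n ws" "colsp n ws = W" using basis_exists[OF W] by auto
  have wsc: "set ws \<subseteq> carrier_vec n" using ws Wc by auto
  obtain us where us: "set us \<subseteq> carrier_vec n" "li n (ws@us)" "carrier_vec n \<subseteq> colsp n (ws@us)"
    using extend[OF subsp_carrier[of n] wsc ws(2)] by auto
  define m where "m = length ws"
  have len: "length (ws@us) = n" by (rule full_length) (use wsc us in auto)
  hence mn: "m \<le> n" and lus: "length us = n - m" unfolding m_def by auto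
  define P where "P = mat_of_cols n (ws@us)"
  have Pc: "P \<in> carrier_mat n n" unfolding P_def using len mat_of_cols_carrier(1)[of n "ws@us"] by simp
  have "det P \<noteq> 0"
  proof
    assume "det P = 0"
    then obtain x where "x \<in> carrier_vec n" "x \<noteq> 0\<^sub>v n" "P *\<^sub>v x = 0\<^sub>v n"
      using det_0_iff_vec_prod_zero[OF Pc] by auto
    with us(2) len show False unfolding li_def P_def by auto
  qed
  from det_non_zero_imp_unit[OF Pc this, unfolded Units_def, of "()"]
  obtain Q where Qc: "Q \<in> carrier_mat n n" and QP: "Q * P = 1\<^sub>m n" and PQ: "P * Q = 1\<^sub>m n"
    by (auto simp: ring_mat_def)
  define M where "M = Q * A * P"
  have Mc: "M \<in> carrier_mat n n" unfolding M_def using Qc A Pc by auto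
  have AM: "A = P * M * Q"
  proof -
    have "P * M * Q = (P * Q) * A * (P * Q)" unfolding M_def using Pc Qc A
      by (simp add: assoc_mult_mat[of _ n n _ n _ n])
    thus ?thesis using PQ A by simp
  qed
  have Wrep: "\<And>w. w \<in> W \<Longrightarrow> \<exists>c\<in>carrier_vec m. w = P *\<^sub>v (c @\<^sub>v 0\<^sub>v (n-m))"
  proof -
    fix w assume "w \<in> W"
    then obtain c where c: "c \<in> carrier_vec m" "w = mat_of_cols n ws *\<^sub>v c" using ws(3) unfolding colsp_def m_def by auto
    have "P *\<^sub>v (c @\<^sub>v 0\<^sub>v (n-m)) = mat_of_cols n ws *\<^sub>v c"
      unfolding P_def lus[symmetric] by (rule mat_of_cols_append_zero) (use wsc us c m_def in auto)
    thus "\<exists>c\<in>carrier_vec m. w = P *\<^sub>v (c @\<^sub>v 0\<^sub>v (n-m))" using c by (intro bexI[of _ c]) auto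
  qed
  have Wimg: "W = {P *\<^sub>v (v @\<^sub>v 0\<^sub>v (n-m)) | v. v \<in> carrier_vec m}"
  proof
    show "W \<subseteq> {P *\<^sub>v (v @\<^sub>v 0\<^sub>v (n-m)) | v. v \<in> carrier_vec m}" using Wrep by blast
    show "{P *\<^sub>v (v @\<^sub>v 0\<^sub>v (n-m)) | v. v \<in> carrier_vec m} \<subseteq> W"
    proof
      fix y assume "y \<in> {P *\<^sub>v (v @\<^sub>v 0\<^sub>v (n-m)) | v. v \<in> carrier_vec m}"
      then obtain c where c: "c \<in> carrier_vec m" "y = P *\<^sub>v (c @\<^sub>v 0\<^sub>v (n-m))" by auto
      have "P *\<^sub>v (c @\<^sub>v 0\<^sub>v (n-m)) = mat_of_cols n ws *\<^sub>v c"
        unfolding P_def lus[symmetric] by (rule mat_of_cols_append_zero) (use wsc us c m_def in auto)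
      hence "y \<in> colsp n ws" unfolding colsp_def using c m_def by auto
      thus "y \<in> W" using ws by simp
    qed
  qed
  have low0: "M $$ (i, j) = 0" if i: "m \<le> i" "i < n" and j: "j < m" for i j
  proof -
    have jn: "j < n" using j mn by simp
    have jl: "j < length ws" using j m_def by simp
    have wj: "ws ! j \<in> carrier_vec n" using wsc nth_mem[OF jl] by blast
    have wuj: "(ws @ us) ! j = ws ! j" using jl by (simp add: nth_append)
    have "col P j = (ws @ us) ! j" unfolding P_def
      by (rule col_mat_of_cols) (use jl wj wuj in auto)
    hence colP: "col P j = ws ! j" using wuj by simp
    have "ws ! j \<in> W" using ws(1) nth_mem[OF jl] by blast
    hence "A *\<^sub>v (ws ! j) \<in> W" using inv by blast
    from Wrep[OF this] obtain c where c: "c \<in> carrier_vec m" "A *\<^sub>v (ws ! j) = P *\<^sub>v (c @\<^sub>v 0\<^sub>v (n-m))" by blast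
    have "dim_vec (c @\<^sub>v 0\<^sub>v (n-m)) = n" using c mn by simp
    hence cz: "c @\<^sub>v 0\<^sub>v (n-m) \<in> carrier_vec n" by (rule carrier_vecI)
    have "col M j = (Q * A) *\<^sub>v col P j" unfolding M_def
      by (rule col_mult2) (use Qc A Pc jn in auto)
    also have "\<dots> = Q *\<^sub>v (A *\<^sub>v col P j)"
      by (rule assoc_mult_mat_vec) (use Qc A Pc jn in auto)
    also have "\<dots> = Q *\<^sub>v (P *\<^sub>v (c @\<^sub>v 0\<^sub>v (n-m)))" by (simp only: colP c(2))
    also have "\<dots> = (Q * P) *\<^sub>v (c @\<^sub>v 0\<^sub>v (n-m))"
      by (rule assoc_mult_mat_vec[symmetric]) (use Qc Pc cz in auto)
    also have "\<dots> = c @\<^sub>v 0\<^sub>v (n-m)" unfolding QP by (rule one_mult_mat_vec[OF cz])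
    finally have cm: "col M j = c @\<^sub>v 0\<^sub>v (n-m)" .
    have "(c @\<^sub>v 0\<^sub>v (n-m)) $ i = 0" using i c by simp
    moreover have "col M j $ i = M $$ (i,j)" using Mc i jn by simp
    ultimately show ?thesis using cm by simp
  qed
  define B where "B = mat m m (\<lambda>(i,j). M $$ (i,j))"
  define C where "C = mat m (n-m) (\<lambda>(i,j). M $$ (i,j+m))"
  define D where "D = mat (n-m) (n-m) (\<lambda>(i,j). M $$ (i+m,j+m))"
  have Bc: "B \<in> carrier_mat m m" and Cc: "C \<in> carrier_mat m (n-m)" and Dc: "D \<in> carrier_mat (n-m) (n-m)"
    by (auto simp: B_def C_def D_def)
  have MB: "M = four_block_mat B C (0\<^sub>m (n-m) m) D"
  proof (rule eq_matI)
    fix i j assume ij: "i < dim_row (four_block_mat B C (0\<^sub>m (n-m) m) D)"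
      "j < dim_col (four_block_mat B C (0\<^sub>m (n-m) m) D)"
    hence i: "i < n" and j: "j < n" using mn Bc Dc by auto
    show "M $$ (i,j) = four_block_mat B C (0\<^sub>m (n-m) m) D $$ (i,j)"
    proof (cases "i < m")
      case True
      then show ?thesis using i j mn Bc Cc Dc by (cases "j < m") (auto simp: B_def C_def D_def)
    next
      case False
      then show ?thesis using i j mn Bc Cc Dc low0[of i j] by (cases "j < m") (auto simp: B_def C_def D_def)
    qed
  qed (use Mc mn Bc Dc in auto)
  have "m \<le> n \<and> P \<in> carrier_mat n n \<and> Q \<in> carrier_mat n n \<and>
     P * Q = 1\<^sub>m n \<and> Q * P = 1\<^sub>m n \<and> B \<in> carrier_mat m m \<and> C \<in> carrier_mat m (n-m) \<and>
     D \<in> carrier_mat (n-m) (n-m) \<and> A = P * four_block_mat B C (0\<^sub>m (n-m) m) D * Q \<and>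
     W = {P *\<^sub>v (v @\<^sub>v 0\<^sub>v (n-m)) | v. v \<in> carrier_vec m}"
    using mn Pc Qc PQ QP Bc Cc Dc Wimg AM MB by simp
  thus ?thesis by blast
qed


lemma char_poly_block:
  fixes B :: "'a :: idom mat"
  assumes B: "B \<in> carrier_mat m m" and C: "C \<in> carrier_mat m k" and D: "D \<in> carrier_mat k k"
  shows "char_poly (four_block_mat B C (0\<^sub>m k m) D) = char_poly B * char_poly D"
proof -
  let ?cm = "\<lambda> A. [:0, 1:] \<cdot>\<^sub>m 1\<^sub>m (dim_row A) + map_mat (\<lambda>a. [:- a:]) A"
  let ?C2 = "map_mat (\<lambda>a. [:- a:]) C"
  have "char_poly (four_block_mat B C (0\<^sub>m k m) D) = det (?cm (four_block_mat B C (0\<^sub>m k m) D))"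
    unfolding char_poly_defs ..
  also have "?cm (four_block_mat B C (0\<^sub>m k m) D) = four_block_mat (?cm B) ?C2 (0\<^sub>m k m) (?cm D)"
    by (rule eq_matI, insert B C D, auto simp: one_poly_def)
  also have "det \<dots> = det (?cm B) * det (?cm D)"
    by (rule det_four_block_mat_lower_left_zero, insert B C D, auto)
  also have "\<dots> = char_poly B * char_poly D" unfolding char_poly_defs ..
  finally show ?thesis .
qed

lemma monic_char_poly: "A \<in> carrier_mat n n \<Longrightarrow> monic (char_poly A)"
  using degree_monic_char_poly[of A n] by simp

lemma chain_mono:
  assumes "\<forall>i<k. S (Suc i) \<subseteq> S i" "i \<le> j" "j \<le> k"
  shows "S j \<subseteq> S i"
  using assms(2,3)
proof (induction j)
  case (Suc j)
  show ?case
  proof (cases "i = Suc j")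
    case False
    hence "i \<le> j" using Suc.prems by simp
    hence "S j \<subseteq> S i" using Suc.IH Suc.prems by simp
    moreover have "S (Suc j) \<subseteq> S j" using assms(1) Suc.prems by simp
    ultimately show ?thesis by blast
  qed simp
qed simp

lemma chain_main:
  "\<forall>n (A::rat mat) S. A \<in> carrier_mat n n \<longrightarrow> goodp (char_poly A) \<longrightarrow> S 0 = carrier_vec n \<longrightarrow>
     S k = {0\<^sub>v n} \<longrightarrow>
     (\<forall>i<k. subsp n (S i) \<and> S (Suc i) \<subseteq> S i \<and> S (Suc i) \<noteq> S i \<and> (\<forall>v\<in>S i. A *\<^sub>v v \<in> S i)) \<longrightarrow>
     nsm (map_poly of_rat (char_poly A)) \<ge> k \<and> nlg (map_poly of_rat (char_poly A)) \<ge> k"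
proof (induction k)
  case 0
  then show ?case by simp
next
  case (Suc k)
  show ?case
  proof (intro allI impI)
    fix n and A :: "rat mat" and S
    assume A: "A \<in> carrier_mat n n" and gA: "goodp (char_poly A)" and S0: "S 0 = carrier_vec n"
      and Sk: "S (Suc k) = {0\<^sub>v n}"
      and ch: "\<forall>i<Suc k. subsp n (S i) \<and> S (Suc i) \<subseteq> S i \<and> S (Suc i) \<noteq> S i \<and> (\<forall>v\<in>S i. A *\<^sub>v v \<in> S i)"
    let ?W = "S 1"
    have W: "subsp n ?W" and Winv: "\<forall>w\<in>?W. A *\<^sub>v w \<in> ?W" if "0 < k" using ch that by auto
    show "nsm (map_poly of_rat (char_poly A)) \<ge> Suc k \<and> nlg (map_poly of_rat (char_poly A)) \<ge> Suc k"
    proof (cases "k = 0")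
      case True
      have "S 1 \<noteq> S 0" using ch True by auto
      hence "carrier_vec n \<noteq> {0\<^sub>v n :: rat vec}" using S0 Sk True by simp
      hence "n \<noteq> 0" by auto
      hence "degree (char_poly A) > 0" using degree_monic_char_poly[OF A] by simp
      thus ?thesis using goodp_nsm[OF gA] True by simp
    next
      case False
      hence k0: "0 < k" by simp
      note W = W[OF k0] and Winv = Winv[OF k0]
      from block_decomp[OF A W Winv] obtain m P Q B C D where
        mn: "m \<le> n" and Pc: "P \<in> carrier_mat n n" and Qc: "Q \<in> carrier_mat n n" and
        PQ: "P * Q = 1\<^sub>m n" and QP: "Q * P = 1\<^sub>m n" and Bc: "B \<in> carrier_mat m m" and
        Cc: "C \<in> carrier_mat m (n-m)" and Dc: "D \<in> carrier_mat (n-m) (n-m)" and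
        AM: "A = P * four_block_mat B C (0\<^sub>m (n-m) m) D * Q" and
        Wimg: "?W = {P *\<^sub>v (v @\<^sub>v 0\<^sub>v (n-m)) | v. v \<in> carrier_vec m}"
        by blast
      define M where "M = four_block_mat B C (0\<^sub>m (n-m) m) D"
      have Mc: "M \<in> carrier_mat n n" unfolding M_def using four_block_carrier_mat[OF Bc Dc] mn by simp
      define emb where "emb v = P *\<^sub>v (v @\<^sub>v 0\<^sub>v (n-m))" for v
      have embc: "v \<in> carrier_vec m \<Longrightarrow> v @\<^sub>v 0\<^sub>v (n-m) \<in> carrier_vec n" for v :: "rat vec"
        using mn by (intro carrier_vecI) simp
      have Wimg': "?W = emb ` carrier_vec m" unfolding Wimg emb_def by blast
      have emb_inj: "v = w" if "v \<in> carrier_vec m" "w \<in> carrier_vec m" "emb v = emb w" for v w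
      proof -
        have "Q *\<^sub>v emb v = Q *\<^sub>v emb w" using that by simp
        hence "(Q * P) *\<^sub>v (v @\<^sub>v 0\<^sub>v (n-m)) = (Q * P) *\<^sub>v (w @\<^sub>v 0\<^sub>v (n-m))"
          unfolding emb_def using Qc Pc embc[OF that(1)] embc[OF that(2)] by simp
        hence "v @\<^sub>v 0\<^sub>v (n-m) = w @\<^sub>v 0\<^sub>v (n-m)" unfolding QP
          using embc[OF that(1)] embc[OF that(2)] by simp
        thus "v = w" using that by (metis append_vec_eq zero_carrier_vec)
      qed
      have emb0: "emb (0\<^sub>v m) = 0\<^sub>v n"
      proof -
        have "0\<^sub>v m @\<^sub>v 0\<^sub>v (n-m) = (0\<^sub>v n :: rat vec)" using mn by (intro eq_vecI) auto
        thus ?thesis unfolding emb_def using Pc by (simp add: mat_mult_zero_vec)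
      qed
      have emb_add: "emb (v + w) = emb v + emb w" if "v \<in> carrier_vec m" "w \<in> carrier_vec m" for v w
      proof -
        have "(v + w) @\<^sub>v 0\<^sub>v (n-m) = (v @\<^sub>v 0\<^sub>v (n-m)) + (w @\<^sub>v 0\<^sub>v (n-m))"
          using that by (intro eq_vecI) auto
        thus ?thesis unfolding emb_def using Pc embc[OF that(1)] embc[OF that(2)]
          by (simp add: mult_add_distrib_mat_vec)
      qed
      have emb_smult: "emb (a \<cdot>\<^sub>v v) = a \<cdot>\<^sub>v emb v" if "v \<in> carrier_vec m" for a v
      proof -
        have "(a \<cdot>\<^sub>v v) @\<^sub>v 0\<^sub>v (n-m) = a \<cdot>\<^sub>v (v @\<^sub>v 0\<^sub>v (n-m))"
          using that by (intro eq_vecI) auto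
        thus ?thesis unfolding emb_def using Pc embc[OF that] by (simp add: mult_mat_vec)
      qed
      have emb_A: "A *\<^sub>v emb v = emb (B *\<^sub>v v)" if v: "v \<in> carrier_vec m" for v
      proof -
        have z: "0\<^sub>v (n-m) \<in> carrier_vec (n-m)" by simp
        have "M *\<^sub>v (v @\<^sub>v 0\<^sub>v (n-m)) = (B *\<^sub>v v + C *\<^sub>v 0\<^sub>v (n-m)) @\<^sub>v (0\<^sub>m (n-m) m *\<^sub>v v + D *\<^sub>v 0\<^sub>v (n-m))"
          unfolding M_def by (rule four_block_mat_mult_vec[OF Bc Cc _ Dc v z]) simp
        also have "\<dots> = (B *\<^sub>v v) @\<^sub>v 0\<^sub>v (n-m)"
        proof -
          have "C *\<^sub>v 0\<^sub>v (n-m) = 0\<^sub>v m" by (rule mat_mult_zero_vec[OF Cc])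
          moreover have "D *\<^sub>v 0\<^sub>v (n-m) = 0\<^sub>v (n-m)" by (rule mat_mult_zero_vec[OF Dc])
          moreover have "0\<^sub>m (n-m) m *\<^sub>v v = 0\<^sub>v (n-m)" using v by (intro eq_vecI) auto
          moreover have "B *\<^sub>v v \<in> carrier_vec m" using Bc v by simp
          ultimately show ?thesis by simp
        qed
        finally have Mv: "M *\<^sub>v (v @\<^sub>v 0\<^sub>v (n-m)) = (B *\<^sub>v v) @\<^sub>v 0\<^sub>v (n-m)" .
        have qp: "Q *\<^sub>v (P *\<^sub>v (v @\<^sub>v 0\<^sub>v (n-m))) = v @\<^sub>v 0\<^sub>v (n-m)"
        proof -
          have "Q *\<^sub>v (P *\<^sub>v (v @\<^sub>v 0\<^sub>v (n-m))) = (Q * P) *\<^sub>v (v @\<^sub>v 0\<^sub>v (n-m))"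
            by (rule assoc_mult_mat_vec[symmetric]) (use Pc Qc embc[OF v] in auto)
          thus ?thesis unfolding QP using embc[OF v] by simp
        qed
        have "A *\<^sub>v emb v = (P * M * Q) *\<^sub>v (P *\<^sub>v (v @\<^sub>v 0\<^sub>v (n-m)))" unfolding emb_def AM M_def ..
        also have "\<dots> = (P * M) *\<^sub>v (Q *\<^sub>v (P *\<^sub>v (v @\<^sub>v 0\<^sub>v (n-m))))"
          by (rule assoc_mult_mat_vec) (use Pc Qc Mc embc[OF v] in auto)
        also have "\<dots> = P *\<^sub>v (M *\<^sub>v (Q *\<^sub>v (P *\<^sub>v (v @\<^sub>v 0\<^sub>v (n-m)))))"
          by (rule assoc_mult_mat_vec) (use Pc Qc Mc embc[OF v] in auto)
        also have "\<dots> = P *\<^sub>v (M *\<^sub>v (v @\<^sub>v 0\<^sub>v (n-m)))" unfolding qp ..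
        also have "\<dots> = emb (B *\<^sub>v v)" unfolding Mv emb_def ..
        finally show ?thesis .
      qed
      have mlt: "m < n"
      proof (rule ccontr)
        assume "\<not> m < n"
        hence mn': "m = n" using mn by simp
        have "carrier_vec n \<subseteq> ?W"
        proof
          fix y :: "rat vec" assume y: "y \<in> carrier_vec n"
          have "Q *\<^sub>v y \<in> carrier_vec m" using Qc y mn' by simp
          moreover have "emb (Q *\<^sub>v y) = y"
          proof -
            have "(Q *\<^sub>v y) @\<^sub>v 0\<^sub>v (n-m) = Q *\<^sub>v y" using mn' Qc y by (intro eq_vecI) auto
            hence "emb (Q *\<^sub>v y) = (P * Q) *\<^sub>v y" unfolding emb_def using Pc Qc y by simp
            thus ?thesis unfolding PQ using y by simp
          qed
          ultimately show "y \<in> ?W" unfolding Wimg' by (metis image_eqI)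
        qed
        moreover have "?W \<subseteq> carrier_vec n" using W by (simp add: subsp_def)
        ultimately have "S 1 = S 0" using S0 by auto
        thus False using ch by auto
      qed
      have sim: "similar_mat A M"
        by (rule similar_matI[where n=n and P=P and Q=Q]) (use Pc Qc PQ QP AM Mc A in \<open>auto simp: M_def\<close>)
      have cpA: "char_poly A = char_poly B * char_poly D"
        unfolding char_poly_similar[OF sim] M_def by (rule char_poly_block[OF Bc Cc Dc])
      have mB: "monic (char_poly B)" by (rule monic_char_poly[OF Bc])
      have mD: "monic (char_poly D)" by (rule monic_char_poly[OF Dc])
      have gB: "goodp (char_poly B)" using goodp_factor[OF gA[unfolded cpA] mB mD] .
      have gD: "goodp (char_poly D)" using goodp_factor[of "char_poly D" "char_poly B"] gA cpA mB mD
        by (simp add: mult.commute)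
      interpret rp: map_poly_comm_ring_hom "of_rat :: rat \<Rightarrow> complex" ..
      have mapA: "map_poly of_rat (char_poly A) = map_poly of_rat (char_poly B) * (map_poly of_rat (char_poly D) :: complex poly)"
        unfolding cpA by (rule rp.hom_mult)
      have nz: "map_poly of_rat (char_poly B) * (map_poly of_rat (char_poly D) :: complex poly) \<noteq> 0"
        using mB mD by auto
      have "degree (char_poly D) > 0" using degree_monic_char_poly[OF Dc] mlt by simp
      from goodp_nsm[OF gD this] have D1: "nsm (map_poly of_rat (char_poly D)) \<ge> 1" "nlg (map_poly of_rat (char_poly D)) \<ge> 1"
        by auto
      define T where "T j = {v \<in> carrier_vec m. emb v \<in> S (Suc j)}" for j
      have Sdec: "\<forall>i<Suc k. S (Suc i) \<subseteq> S i" using ch by auto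
      have SW: "S (Suc j) \<subseteq> ?W" if "j \<le> k" for j
        using chain_mono[OF Sdec, of 1 "Suc j"] that by simp
      have Wimg'': "S (Suc 0) = emb ` carrier_vec m" using Wimg' by simp
      have T0: "T 0 = carrier_vec m" unfolding T_def Wimg'' by auto
      have Tk: "T k = {0\<^sub>v m}"
      proof
        show "T k \<subseteq> {0\<^sub>v m}"
        proof
          fix v assume "v \<in> T k"
          hence v: "v \<in> carrier_vec m" "emb v = emb (0\<^sub>v m)" unfolding T_def Sk emb0 by auto
          show "v \<in> {0\<^sub>v m}" using emb_inj[OF v(1) _ v(2)] by simp
        qed
        show "{0\<^sub>v m} \<subseteq> T k" using emb0 by (simp add: T_def Sk)
      qed
      have Tch: "\<forall>i<k. subsp m (T i) \<and> T (Suc i) \<subseteq> T i \<and> T (Suc i) \<noteq> T i \<and> (\<forall>v\<in>T i. B *\<^sub>v v \<in> T i)"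
      proof (intro allI impI conjI)
        fix i assume ik: "i < k"
        have Si: "subsp n (S (Suc i))" using ch ik by auto
        show "subsp m (T i)" unfolding subsp_def
        proof (intro conjI ballI allI)
          show "T i \<subseteq> carrier_vec m" unfolding T_def by auto
          show "0\<^sub>v m \<in> T i" using Si emb0 by (simp add: subsp_def T_def)
          fix x y assume "x \<in> T i" "y \<in> T i"
          thus "x + y \<in> T i" unfolding T_def using emb_add Si by (simp add: subsp_def)
        next
          fix a x assume "x \<in> T i"
          thus "a \<cdot>\<^sub>v x \<in> T i" unfolding T_def using emb_smult Si by (simp add: subsp_def)
        qed
        show "T (Suc i) \<subseteq> T i" unfolding T_def using ch ik by auto
        show "T (Suc i) \<noteq> T i"
        proof
          assume eq: "T (Suc i) = T i"
          have "S (Suc (Suc i)) = S (Suc i)"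
          proof
            show "S (Suc (Suc i)) \<subseteq> S (Suc i)" using ch ik by auto
            show "S (Suc i) \<subseteq> S (Suc (Suc i))"
            proof
              fix x assume x: "x \<in> S (Suc i)"
              hence "x \<in> ?W" using SW[of i] ik by auto
              then obtain v where v: "v \<in> carrier_vec m" "x = emb v" unfolding Wimg' by auto
              hence "v \<in> T i" unfolding T_def using x by simp
              hence "v \<in> T (Suc i)" using eq by simp
              thus "x \<in> S (Suc (Suc i))" unfolding T_def using v by simp
            qed
          qed
          thus False using ch ik by auto
        qed
        show "\<forall>v\<in>T i. B *\<^sub>v v \<in> T i"
        proof
          fix v assume "v \<in> T i"
          hence v: "v \<in> carrier_vec m" "emb v \<in> S (Suc i)" unfolding T_def by auto
          have "A *\<^sub>v emb v \<in> S (Suc i)" using ch ik v(2) by auto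
          thus "B *\<^sub>v v \<in> T i" unfolding T_def using emb_A[OF v(1)] Bc v(1) by simp
        qed
      qed
      have IH: "nsm (map_poly of_rat (char_poly B)) \<ge> k \<and> nlg (map_poly of_rat (char_poly B)) \<ge> k"
        using Suc.IH Bc gB T0 Tk Tch by blast
      show ?thesis unfolding mapA nsm_mult[OF nz] nlg_mult[OF nz] using IH D1 by simp
    qed
  qed
qed


lemma lspan_least:
  assumes Z: "subsp n Z" and X: "X \<subseteq> Z"
  shows "lspan n X \<subseteq> Z"
proof
  fix v assume "v \<in> lspan n X"
  thus "v \<in> Z" by (induction rule: lspan.induct) (use Z X in \<open>auto simp: subsp_def\<close>)
qed

lemma lspan_subsp:
  assumes X: "X \<subseteq> carrier_vec n" shows "subsp n (lspan n X)"
proof -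
  have "lspan n X \<subseteq> carrier_vec n" by (rule lspan_least[OF subsp_carrier X])
  thus ?thesis unfolding subsp_def by (auto intro: lspan.intros)
qed

lemma lcs_carrier: "lie_algebra n br \<Longrightarrow> lcs n br i \<subseteq> carrier_vec n"
proof (induction i rule: nat_less_induct)
  case (1 i)
  show ?case
  proof (cases i)
    case (Suc j) note j = this
    show ?thesis
    proof (cases j)
      case (Suc l)
      have "lcs n br (Suc l) \<subseteq> carrier_vec n" using 1 j Suc by auto
      moreover have "\<forall>x\<in>carrier_vec n. \<forall>y\<in>carrier_vec n. br x y \<in> carrier_vec n"
        using 1(2) unfolding lie_algebra_def by blast
      ultimately have "{br x y | x y. x \<in> carrier_vec n \<and> y \<in> lcs n br (Suc l)} \<subseteq> carrier_vec n"
        by blast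
      thus ?thesis using j Suc by (simp add: lspan_least[OF subsp_carrier])
    qed (use j in simp)
  qed simp
qed


lemma lcs_subsp:
  assumes L: "lie_algebra n br" shows "subsp n (lcs n br i)"
proof (cases i)
  case (Suc j) note j = this
  show ?thesis
  proof (cases j)
    case (Suc l)
    have "lcs n br (Suc l) \<subseteq> carrier_vec n" using lcs_carrier[OF L] by auto
    moreover have "\<forall>x\<in>carrier_vec n. \<forall>y\<in>carrier_vec n. br x y \<in> carrier_vec n"
      using L unfolding lie_algebra_def by blast
    ultimately have "{br x y | x y. x \<in> carrier_vec n \<and> y \<in> lcs n br (Suc l)} \<subseteq> carrier_vec n"
      by blast
    thus ?thesis using j Suc by (simp add: lspan_subsp)
  qed (use j subsp_carrier in simp)
qed (simp add: subsp_carrier)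

lemma lcs_dec:
  assumes L: "lie_algebra n br" shows "lcs n br (Suc (Suc i)) \<subseteq> lcs n br (Suc i)"
proof (induction i)
  case 0
  then show ?case using lcs_carrier[OF L, of 2] by (simp add: numeral_2_eq_2)
next
  case (Suc i)
  have "{br x y | x y. x \<in> carrier_vec n \<and> y \<in> lcs n br (Suc (Suc i))}
      \<subseteq> {br x y | x y. x \<in> carrier_vec n \<and> y \<in> lcs n br (Suc i)}" using Suc by blast
  also have "\<dots> \<subseteq> lcs n br (Suc (Suc i))" by (auto intro: lspan.gen)
  finally have "lspan n {br x y | x y. x \<in> carrier_vec n \<and> y \<in> lcs n br (Suc (Suc i))} \<subseteq> lcs n br (Suc (Suc i))"
    by (rule lspan_least[OF lcs_subsp[OF L]])
  thus ?case by simp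
qed

lemma preimage_subsp:
  assumes f: "(f :: rat mat) \<in> carrier_mat n n" and Z: "subsp n Z"
  shows "subsp n {v \<in> carrier_vec n. f *\<^sub>v v \<in> Z}"
  unfolding subsp_def
proof (intro conjI ballI allI)
  show "{v \<in> carrier_vec n. f *\<^sub>v v \<in> Z} \<subseteq> carrier_vec n" by auto
  show "0\<^sub>v n \<in> {v \<in> carrier_vec n. f *\<^sub>v v \<in> Z}" using Z mat_mult_zero_vec[OF f] by (simp add: subsp_def)
  fix x y assume "x \<in> {v \<in> carrier_vec n. f *\<^sub>v v \<in> Z}" "y \<in> {v \<in> carrier_vec n. f *\<^sub>v v \<in> Z}"
  thus "x + y \<in> {v \<in> carrier_vec n. f *\<^sub>v v \<in> Z}" using Z f by (simp add: subsp_def mult_add_distrib_mat_vec)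
next
  fix a x assume "x \<in> {v \<in> carrier_vec n. f *\<^sub>v v \<in> Z}"
  thus "a \<cdot>\<^sub>v x \<in> {v \<in> carrier_vec n. f *\<^sub>v v \<in> Z}" using Z f by (simp add: subsp_def mult_mat_vec)
qed

lemma lcs_inv:
  assumes L: "lie_algebra n br" and F: "lie_automorphism n br f"
  shows "\<forall>v\<in>lcs n br i. f *\<^sub>v v \<in> lcs n br i"
proof (induction i rule: nat_less_induct)
  case (1 i)
  have fc: "f \<in> carrier_mat n n" using F by (simp add: lie_automorphism_def)
  show ?case
  proof (cases i)
    case (Suc j) note j = this
    show ?thesis
    proof (cases j)
      case (Suc l)
      have IH: "\<forall>v\<in>lcs n br (Suc l). f *\<^sub>v v \<in> lcs n br (Suc l)" using 1 j Suc by auto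
      let ?Z = "lcs n br (Suc (Suc l))"
      let ?G = "{br x y | x y. x \<in> carrier_vec n \<and> y \<in> lcs n br (Suc l)}"
      have cl: "\<forall>x\<in>carrier_vec n. \<forall>y\<in>carrier_vec n. br x y \<in> carrier_vec n"
        using L unfolding lie_algebra_def by blast
      have hom: "\<forall>x\<in>carrier_vec n. \<forall>y\<in>carrier_vec n. f *\<^sub>v br x y = br (f *\<^sub>v x) (f *\<^sub>v y)"
        using F unfolding lie_automorphism_def by blast
      have lc: "lcs n br (Suc l) \<subseteq> carrier_vec n" by (rule lcs_carrier[OF L])
      have "?G \<subseteq> {v \<in> carrier_vec n. f *\<^sub>v v \<in> ?Z}"
      proof
        fix z assume "z \<in> ?G"
        then obtain x y where xy: "z = br x y" "x \<in> carrier_vec n" "y \<in> lcs n br (Suc l)" by blast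
        have y: "y \<in> carrier_vec n" using xy lc by auto
        have "f *\<^sub>v z = br (f *\<^sub>v x) (f *\<^sub>v y)" using hom xy y by simp
        moreover have "f *\<^sub>v x \<in> carrier_vec n" using fc xy by simp
        moreover have "f *\<^sub>v y \<in> lcs n br (Suc l)" using IH xy by simp
        ultimately have "f *\<^sub>v z \<in> ?G" by blast
        hence "f *\<^sub>v z \<in> ?Z" by (auto intro: lspan.gen)
        moreover have "z \<in> carrier_vec n" using cl xy y by simp
        ultimately show "z \<in> {v \<in> carrier_vec n. f *\<^sub>v v \<in> ?Z}" by simp
      qed
      hence "lspan n ?G \<subseteq> {v \<in> carrier_vec n. f *\<^sub>v v \<in> ?Z}"
        by (rule lspan_least[OF preimage_subsp[OF fc lcs_subsp[OF L]]])
      thus ?thesis using j Suc by auto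
    qed (use j fc in simp)
  qed (use fc in simp)
qed

lemma lcs_stable:
  assumes eq: "lcs n br (Suc (Suc i)) = lcs n br (Suc i)"
  shows "lcs n br (Suc i + d) = lcs n br (Suc i)"
proof (induction d)
  case (Suc d)
  have "lcs n br (Suc i + Suc d) = lspan n {br x y | x y. x \<in> carrier_vec n \<and> y \<in> lcs n br (Suc i + d)}"
    by simp
  also have "\<dots> = lcs n br (Suc (Suc i))" unfolding Suc by simp
  finally show ?case using eq by simp
qed simp


lemma goodp_anosov:
  assumes A: "anosov n br f"
  shows "goodp (char_poly f)"
proof -
  have fc: "f \<in> carrier_mat n n" using A by (simp add: anosov_def lie_automorphism_def)
  have il: "\<forall>i. coeff (char_poly f) i \<in> \<int>" "det f = 1 \<or> det f = -1"
    using A by (auto simp: anosov_def integer_like_def)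
  have hy: "\<forall>z. poly (cpoly f) z = 0 \<longrightarrow> cmod z \<noteq> 1" using A by (simp add: anosov_def hyperbolic_def)
  have cp: "cpoly f = map_poly of_rat (char_poly f)" unfolding cpoly_def by (rule of_rat_hom.char_poly_hom[OF fc])
  have m: "monic (char_poly f)" by (rule monic_char_poly[OF fc])
  have int: "char_poly f = map_poly rat_of_int (map_poly floor (char_poly f))"
  proof (rule poly_eqI)
    fix i
    obtain z where z: "coeff (char_poly f) i = of_int z" using il(1) Ints_cases by metis
    show "coeff (char_poly f) i = coeff (map_poly rat_of_int (map_poly floor (char_poly f))) i"
      by (simp add: coeff_map_poly z)
  qed
  have "coeff (char_poly f) 0 = poly (char_poly f) 0" by (simp add: poly_0_coeff_0)
  also have "\<dots> = det (- (char_matrix f 0))" by (rule char_poly_matrix[OF fc])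
  also have "- (char_matrix f 0) = (-1) \<cdot>\<^sub>m f"
    using fc by (intro eq_matI) (auto simp: char_matrix_def)
  also have "det \<dots> = (-1) ^ n * det f" using fc by simp
  finally have "\<bar>coeff (char_poly f) 0\<bar> = 1" using il(2) by (auto simp: abs_mult)
  thus ?thesis unfolding goodp_def
    by (intro conjI exI[of _ "map_poly floor (char_poly f)"] m int) (use hy[unfolded cp] in auto)
qed

theorem mainTheorem10:
  fixes n c :: nat and br :: "rat vec \<Rightarrow> rat vec \<Rightarrow> rat vec" and f :: "rat mat"
  assumes "lie_algebra n br"
    and "nilpotency_class n br c"
    and "anosov n br f"
  shows "min (n_small f) (n_large f) \<ge> c"
proof -
  note L = assms(1)
  have fc: "f \<in> carrier_mat n n" using assms(3) by (simp add: anosov_def lie_automorphism_def)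
  have F: "lie_automorphism n br f" using assms(3) by (simp add: anosov_def)
  have nc: "lcs n br (Suc c) = {0\<^sub>v n}" "lcs n br c \<noteq> {0\<^sub>v n}"
    using assms(2) by (auto simp: nilpotency_class_def)
  define S where "S i = lcs n br (Suc i)" for i
  have S0: "S 0 = carrier_vec n" by (simp add: S_def)
  have Sc: "S c = {0\<^sub>v n}" using nc by (simp add: S_def)
  have ch: "\<forall>i<c. subsp n (S i) \<and> S (Suc i) \<subseteq> S i \<and> S (Suc i) \<noteq> S i \<and> (\<forall>v\<in>S i. f *\<^sub>v v \<in> S i)"
  proof (intro allI impI conjI)
    fix i assume ic: "i < c"
    show "subsp n (S i)" unfolding S_def by (rule lcs_subsp[OF L])
    show "S (Suc i) \<subseteq> S i" unfolding S_def by (rule lcs_dec[OF L])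
    show "\<forall>v\<in>S i. f *\<^sub>v v \<in> S i" unfolding S_def by (rule lcs_inv[OF L F])
    show "S (Suc i) \<noteq> S i"
    proof
      assume "S (Suc i) = S i"
      hence eq: "lcs n br (Suc (Suc i)) = lcs n br (Suc i)" by (simp add: S_def)
      have "lcs n br (Suc i + (c - Suc i)) = lcs n br (Suc i)" by (rule lcs_stable[OF eq])
      moreover have "lcs n br (Suc i + (Suc c - Suc i)) = lcs n br (Suc i)" by (rule lcs_stable[OF eq])
      ultimately have "lcs n br c = lcs n br (Suc c)" using ic by simp
      thus False using nc by simp
    qed
  qed
  have main: "nsm (map_poly of_rat (char_poly f)) \<ge> c \<and> nlg (map_poly of_rat (char_poly f)) \<ge> c"
    using chain_main[of c] fc goodp_anosov[OF assms(3)] S0 Sc ch by blast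
  have cp: "cpoly f = map_poly of_rat (char_poly f)" unfolding cpoly_def by (rule of_rat_hom.char_poly_hom[OF fc])
  have "n_small f = nsm (map_poly of_rat (char_poly f))" unfolding n_small_def nsm_def cp ..
  moreover have "n_large f = nlg (map_poly of_rat (char_poly f))" unfolding n_large_def nlg_def cp ..
  ultimately show ?thesis using main by simp
qed

end
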